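(* Let $n\ge 3$ be an odd integer and $k$ a positive integer with $2k\mid n+1$, and put $t=\frac{n(n+1)}{2k}$. For $1\le i\le \frac{n+1}{2k}$ and $1\le j\le k$ define $$t_{2i-1,j}=n-\bigl(2k(i-1)+(j-1)\bigr),\qquad t_{2i,j}=n-2ki+j,$$ and for $1\le j\le k$ let $T_j=\{t_{i,j}: 1\le i\le \tfrac{n+1}{k}\}$ (the $j$-th column of the $\frac{n+1}{k}\times k$ matrix $(t_{ij})$). Then $T_1,\ldots,T_k$ are pairwise disjoint, $\bigcup_{j=1}^k T_j=\{0,1,\ldots,n\}$, and $\sum_{x\in T_j}x=t$ for every $1\le j\le k$. In particular the sets $T_j\setminus\{0\}$ form a partition of $\{1,\ldots,n\}$ into $k$ sets each with sum $t$. *)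

theory Defs
  imports Main
begin

definition t_entry :: "int \<Rightarrow> int \<Rightarrow> int \<Rightarrow> int \<Rightarrow> int" where
  "t_entry n k i j =
     (if odd i then n - (2 * k * ((i + 1) div 2 - 1) + (j - 1))
      else n - 2 * k * (i div 2) + j)"

definition T_col :: "int \<Rightarrow> int \<Rightarrow> int \<Rightarrow> int set" where
  "T_col n k j = (\<lambda>i. t_entry n k i j) ` {1 .. (n + 1) div k}"

end

theory Submission
  imports Defs
begin

lemma dm_lem:
  fixes d a r :: int
  assumes "d > 0" "0 \<le> r" "r < d"
  shows "(d*a + r) div d = a \<and> (d*a + r) mod d = r"
  using assms by (simp add: add.commute)

lemma sum_lem:
  fixes n k j :: int
  shows "(\<Sum>i\<in>{1..2*int M}. t_entry n k i j) = int M*(2*n+1) - 2*k*int M*int M"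
proof (induction M)
  case 0 then show ?case by simp
next
  case (Suc M)
  have e: "{1..2*int (Suc M)} = insert (2*int M+2) (insert (2*int M+1) {1..2*int M})"
    by auto
  have o: "t_entry n k (2*int M+1) j = n - 2*k*int M - j + 1"
    unfolding t_entry_def by simp
  have ev: "t_entry n k (2*int M+2) j = n - 2*k*(int M+1) + j"
    unfolding t_entry_def by simp
  have "(\<Sum>i\<in>{1..2*int (Suc M)}. t_entry n k i j) = t_entry n k (2*int M+2) j + t_entry n k (2*int M+1) j + (\<Sum>i\<in>{1..2*int M}. t_entry n k i j)"
    unfolding e by simp
  also have "\<dots> = int (Suc M)*(2*n+1) - 2*k*int (Suc M)*int (Suc M)"
    unfolding o ev Suc.IH by (simp add: algebra_simps)
  finally show ?case .
qed



lemma decode: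
  fixes n k m i j :: int
  assumes k: "k \<ge> 1" and i: "i \<in> {1..2*m}" and j: "j \<in> {1..k}"
  obtains q r where "n - t_entry n k i j = 2*k*q + r" "0 \<le> q" "q < m" "0 \<le> r" "r < 2*k"
    "odd i \<longleftrightarrow> r < k"
    "odd i \<Longrightarrow> i = 2*q+1 \<and> r = j - 1" "even i \<Longrightarrow> i = 2*q+2 \<and> r = 2*k - j"
proof (cases "odd i")
  case True
  define a where "a = i div 2"
  have a: "i = 2*a+1" using True unfolding a_def by presburger
  have d: "(i+1) div 2 = a + 1" using a by simp
  have t: "t_entry n k i j = n - (2*k*a + (j-1))" unfolding t_entry_def d using True by simp
  have j1: "1 \<le> j" "j \<le> k" using j by auto
  have i1: "1 \<le> i" "i \<le> 2*m" using i by auto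
  show ?thesis
    apply (rule that[of a "j-1"])
    using True a t j1 i1 k by simp_all
next
  case False
  define a where "a = i div 2 - 1"
  have a: "i = 2*a+2" using False unfolding a_def by presburger
  have d: "i div 2 = a + 1" using a by simp
  have t: "t_entry n k i j = n - (2*k*a + (2*k-j))" unfolding t_entry_def d using False
    by (simp add: algebra_simps)
  have j1: "1 \<le> j" "j \<le> k" using j by auto
  have i1: "1 \<le> i" "i \<le> 2*m" using i by auto
  show ?thesis
    apply (rule that[of a "2*k-j"])
    using False a t j1 i1 k by simp_all
qed


theorem mainTheorem3:
  fixes n k :: int
  assumes "n \<ge> 3" and "odd n" and "k \<ge> 1" and "(2 * k) dvd (n + 1)"
  shows "(\<forall>j1 \<in> {1..k}. \<forall>j2 \<in> {1..k}. j1 \<noteq> j2 \<longrightarrow> T_col n k j1 \<inter> T_col n k j2 = {})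
       \<and> (\<Union>j \<in> {1..k}. T_col n k j) = {0..n}
       \<and> (\<forall>j \<in> {1..k}. (\<Sum>x \<in> T_col n k j. x) = n * (n + 1) div (2 * k))
       \<and> (\<forall>j \<in> {1..k}. (\<Sum>x \<in> T_col n k j - {0}. x) = n * (n + 1) div (2 * k))
       \<and> (\<forall>j \<in> {1..k}. T_col n k j - {0} \<noteq> {})
       \<and> (\<Union>j \<in> {1..k}. T_col n k j - {0}) = {1..n}"
proof -
  have k: "k \<ge> 1" using assms by simp
  obtain m where nm: "n + 1 = 2*k*m" using assms(4) by (metis dvdE)
  have m1: "m \<ge> 1"
  proof (rule ccontr)
    assume "\<not> m \<ge> 1"
    then have "m \<le> 0" by simp
    then have "2*k*m \<le> 0" using k by (simp add: mult_nonneg_nonpos)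
    then show False using nm assms(1) by simp
  qed
  have dk: "(n+1) div k = 2*m" using nm k by simp
  have T: "T_col n k j = (\<lambda>i. t_entry n k i j) ` {1..2*m}" for j
    unfolding T_col_def dk ..
  have rangeA: "t_entry n k i j \<in> {0..n}" if i: "i \<in> {1..2*m}" and j: "j \<in> {1..k}" for i j
  proof -
    obtain q r where qr: "n - t_entry n k i j = 2*k*q + r" "0 \<le> q" "q < m" "0 \<le> r" "r < 2*k"
      using decode[OF k i j] by blast
    have "2*k*q \<le> 2*k*(m-1)" using qr k by (intro mult_left_mono) auto
    then have "2*k*q + r \<le> n" using qr nm by (simp add: algebra_simps)
    moreover have "0 \<le> 2*k*q" using qr k by simp
    ultimately show ?thesis using qr(1,4) by (simp only: atLeastAtMost_iff) linarith
  qed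
  have injB: "i = i' \<and> j = j'"
    if i: "i \<in> {1..2*m}" and j: "j \<in> {1..k}" and i': "i' \<in> {1..2*m}" and j': "j' \<in> {1..k}"
      and eq: "t_entry n k i j = t_entry n k i' j'" for i j i' j'
  proof -
    obtain q r where qr: "n - t_entry n k i j = 2*k*q + r" "0 \<le> q" "q < m" "0 \<le> r" "r < 2*k"
      "odd i \<longleftrightarrow> r < k"
      "odd i \<Longrightarrow> i = 2*q+1 \<and> r = j - 1" "even i \<Longrightarrow> i = 2*q+2 \<and> r = 2*k - j"
      using decode[OF k i j] by blast
    obtain q' r' where qr': "n - t_entry n k i' j' = 2*k*q' + r'" "0 \<le> q'" "q' < m" "0 \<le> r'" "r' < 2*k"
      "odd i' \<longleftrightarrow> r' < k"
      "odd i' \<Longrightarrow> i' = 2*q'+1 \<and> r' = j' - 1" "even i' \<Longrightarrow> i' = 2*q'+2 \<and> r' = 2*k - j'"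
      using decode[OF k i' j'] by blast
    have e: "2*k*q + r = 2*k*q' + r'" using qr(1) qr'(1) eq by simp
    have kp: "2*k > 0" using k by simp
    have "q = q' \<and> r = r'"
      using dm_lem[OF kp qr(4) qr(5), of q] dm_lem[OF kp qr'(4) qr'(5), of q'] e by simp
    then show ?thesis using qr qr' by (cases "odd i") auto
  qed
  have surjC: "\<exists>i\<in>{1..2*m}. \<exists>j\<in>{1..k}. t_entry n k i j = x" if x: "x \<in> {0..n}" for x
  proof -
    define q where "q = (n - x) div (2*k)"
    define r where "r = (n - x) mod (2*k)"
    have kp: "2*k > 0" using k by simp
    have dec: "n - x = 2*k*q + r" unfolding q_def r_def by simp
    have r0: "0 \<le> r" "r < 2*k" unfolding r_def using kp by simp_all
    have q0: "0 \<le> q" unfolding q_def using x kp by (simp add: pos_imp_zdiv_nonneg_iff)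
    have qm: "q < m"
    proof (rule ccontr)
      assume "\<not> q < m"
      then have "2*k*m \<le> 2*k*q" using k by (intro mult_left_mono) auto
      moreover have "0 \<le> x" using x by simp
      ultimately show False using dec nm r0 by linarith
    qed
    show ?thesis
    proof (cases "r < k")
      case True
      have "t_entry n k (2*q+1) (r+1) = x"
        unfolding t_entry_def using dec by simp
      then show ?thesis using True r0 q0 qm
        by (intro bexI[of _ "2*q+1"] bexI[of _ "r+1"]) auto
    next
      case False
      have "t_entry n k (2*q+2) (2*k-r) = x"
        unfolding t_entry_def using dec by (simp add: algebra_simps)
      then show ?thesis using False r0 q0 qm
        by (intro bexI[of _ "2*q+2"] bexI[of _ "2*k-r"]) auto
    qed
  qed
  have U: "(\<Union>j \<in> {1..k}. T_col n k j) = {0..n}"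
  proof
    show "(\<Union>j \<in> {1..k}. T_col n k j) \<subseteq> {0..n}" unfolding T using rangeA by blast
    show "{0..n} \<subseteq> (\<Union>j \<in> {1..k}. T_col n k j)" unfolding T using surjC by blast
  qed
  have D: "\<forall>j1 \<in> {1..k}. \<forall>j2 \<in> {1..k}. j1 \<noteq> j2 \<longrightarrow> T_col n k j1 \<inter> T_col n k j2 = {}"
    unfolding T using injB by blast
  have tgt: "n * (n + 1) div (2 * k) = n * m"
    using nm k by simp
  have S: "(\<Sum>x \<in> T_col n k j. x) = n * (n + 1) div (2 * k)" if j: "j \<in> {1..k}" for j
  proof -
    have inj: "inj_on (\<lambda>i. t_entry n k i j) {1..2*m}"
      using injB j by (auto intro!: inj_onI)
    have "(\<Sum>x \<in> T_col n k j. x) = (\<Sum>i\<in>{1..2*m}. t_entry n k i j)"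
      unfolding T using sum.reindex[OF inj, of "\<lambda>x. x"] by simp
    also have "\<dots> = (\<Sum>i\<in>{1..2*int (nat m)}. t_entry n k i j)" using m1 by simp
    also have "\<dots> = int (nat m)*(2*n+1) - 2*k*int (nat m)*int (nat m)" by (rule sum_lem)
    also have "\<dots> = m*(2*n+1) - (2*k*m)*m" using m1 by simp
    also have "\<dots> = n*m" unfolding nm[symmetric] by (simp add: algebra_simps)
    finally show ?thesis using tgt by simp
  qed
  have S0: "(\<Sum>x \<in> T_col n k j - {0}. x) = n * (n + 1) div (2 * k)" if j: "j \<in> {1..k}" for j
  proof -
    have "finite (T_col n k j)" unfolding T by simp
    then have "(\<Sum>x \<in> T_col n k j - {0}. x) = (\<Sum>x \<in> T_col n k j. x)"
      by (simp add: sum_diff1)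
    then show ?thesis using S[OF j] by simp
  qed
  have NE: "T_col n k j - {0} \<noteq> {}" if j: "j \<in> {1..k}" for j
  proof -
    have "2*k*1 \<le> 2*k*m" using k m1 by (intro mult_left_mono) auto
    then have nk: "n \<ge> k" using nm k by linarith
    have "t_entry n k 1 j \<in> T_col n k j" unfolding T using m1 by auto
    moreover have "t_entry n k 1 j = n - (j - 1)" unfolding t_entry_def by simp
    moreover have "n - (j - 1) \<noteq> 0" using j nk by simp
    ultimately show ?thesis by auto
  qed
  have U0: "(\<Union>j \<in> {1..k}. T_col n k j - {0}) = {1..n}"
  proof -
    have "(\<Union>j \<in> {1..k}. T_col n k j - {0}) = (\<Union>j \<in> {1..k}. T_col n k j) - {0}" by blast
    then show ?thesis using U by auto
  qed
  show ?thesis using D U S S0 NE U0 by blast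
qed

end
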